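(* If $x\in(-1,1)$ is irrational then for each $r\in\{0,1\}$ and each $y\in\overline{\mathbb{R}}$ with $|y|\in[\pi/2,+\infty]$ there exists a sequence $n_j$ such that $n_j\equiv r \pmod 2$ for all $j$ and $\lim_{j\to\infty}D_{n_j}(x)/n_j=y$.
   Context: Nodes: $x_{k,n}:=2k/n-1$, $k=0,\dots,n$; $D_n(x)=\sum_{k=0}^n(-1)^k\frac{1}{x-x_{k,n}}$. $\overline{\mathbb{R}}=\mathbb{R}\cup\{\pm\infty\}$ is the two-point compactification of $\mathbb{R}$. A sequence $n_j$ is a strictly increasing map $\mathbb{N}\to\mathbb{N}$. *)

theory Defs
  imports "HOL-Analysis.Analysis" "HOL-Library.Extended_Real"
begin

definition node :: "nat \<Rightarrow> nat \<Rightarrow> real" where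
  "node k n = 2 * real k / real n - 1"

definition D :: "nat \<Rightarrow> real \<Rightarrow> real" where
  "D n x = (\<Sum>k = 0..n. (-1) ^ k * (1 / (x - node k n)))"

end

theory Submission imports Defs begin

definition Pp :: "nat \<Rightarrow> real \<Rightarrow> real" where
  "Pp L t = (\<Sum>i<L. (-1)^i * (1 / (t + real i)))"
definition asum :: "real \<Rightarrow> real" where
  "asum t = (\<Sum>i. (-1)^i * (1 / (t + real i)))"

lemma alt_tail:
  fixes a :: "nat \<Rightarrow> real"
  assumes "a \<longlonglongrightarrow> 0" "\<And>n. 0 \<le> a n" "\<And>n. a (Suc n) \<le> a n"
  shows "\<bar>(\<Sum>i. (-1)^i * a i) - (\<Sum>i<L. (-1)^i * a i)\<bar> \<le> a L"
proof -
  note Lb = summable_Leibniz'[OF assms]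
  show ?thesis
  proof (cases "even L")
    case True
    then obtain n where L: "L = 2*n" by auto
    have "(\<Sum>i<2*n+1. (-1)^i * a i) = (\<Sum>i<2*n. (-1)^i * a i) + a (2*n)" by simp
    then show ?thesis using Lb(2)[of n] Lb(4)[of n] L by auto
  next
    case False
    then obtain n where L: "L = 2*n+1" by (metis oddE)
    have "(\<Sum>i<2*(Suc n). (-1)^i * a i) = (\<Sum>i<2*n+1. (-1)^i * a i) - a (2*n+1)" by simp
    then show ?thesis using Lb(2)[of "Suc n"] Lb(4)[of n] L by auto
  qed
qed

lemma inv_seq:
  fixes t :: real assumes "t > 0"
  shows "(\<lambda>i. 1 / (t + real i)) \<longlonglongrightarrow> 0" "\<And>n. 0 \<le> 1 / (t + real n)"
    "\<And>n. 1 / (t + real (Suc n)) \<le> 1 / (t + real n)"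
proof -
  show "(\<lambda>i. 1 / (t + real i)) \<longlonglongrightarrow> 0"
  proof (rule Lim_null_comparison[OF _ lim_inverse_n])
    show "\<forall>\<^sub>F i in sequentially. norm (1 / (t + real i)) \<le> inverse (real i)"
    proof (rule eventually_sequentiallyI[of 1])
      fix i :: nat assume "1 \<le> i"
      then show "norm (1 / (t + real i)) \<le> inverse (real i)"
        using assms by (simp add: divide_simps)
    qed
  qed
  show "\<And>n. 0 \<le> 1 / (t + real n)" using assms by simp
  show "\<And>n. 1 / (t + real (Suc n)) \<le> 1 / (t + real n)"
    using assms by (simp add: divide_simps)
qed

lemma asum_tail: "t > 0 \<Longrightarrow> \<bar>asum t - Pp L t\<bar> \<le> 1 / (t + real L)"
  unfolding asum_def Pp_def using alt_tail[OF inv_seq] by blast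

lemma asum_summable: "t > 0 \<Longrightarrow> summable (\<lambda>i. (-1)^i * (1 / (t + real i)))"
  using summable_Leibniz'(1)[OF inv_seq] by blast

lemma asum_bounds: assumes "t > 0" shows "asum t \<ge> 0" "asum t \<ge> 1/t - 1"
proof -
  note Lb = summable_Leibniz'(2)[OF inv_seq[OF assms]]
  show "asum t \<ge> 0" using Lb[of 0] by (simp add: asum_def)
  have "asum t \<ge> 1/t - 1/(t+1)" using Lb[of 1] by (simp add: asum_def numeral_2_eq_2)
  moreover have "1/(t+1) \<le> 1" using assms by (simp add: divide_simps)
  ultimately show "asum t \<ge> 1/t - 1" by linarith
qed

lemma asum_half: "asum (1/2) = pi/2"
proof -
  have e: "(-1)^i * (1 / (1/2 + real i)) = 2 * ((-1)^i * 1 / real (i*2+1))" for i :: nat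
    by (simp add: divide_simps)
  have s: "summable (\<lambda>i. (-1)^i * 1 / real (i*2+1) :: real)"
  proof -
    have "summable (\<lambda>i. 2 * ((-1)^i * 1 / real (i*2+1) :: real))"
      using asum_summable[of "1/2"] unfolding e by simp
    then have "summable (\<lambda>i. (1/2) * (2 * ((-1)^i * 1 / real (i*2+1) :: real)))"
      by (rule summable_mult)
    then show ?thesis by simp
  qed
  have "asum (1/2) = (\<Sum>i. 2 * ((-1)^i * 1 / real (i*2+1) :: real))" unfolding asum_def e ..
  also have "\<dots> = 2 * (\<Sum>i. (-1)^i * 1 / real (i*2+1) :: real)" by (rule suminf_mult[OF s])
  also have "\<dots> = pi/2" using pi_series by simp
  finally show ?thesis .
qed

lemma asum_cont: "continuous_on {0<..} asum"
proof (rule uniform_limit_theorem[where f = "\<lambda>L. Pp L" and F = sequentially])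
  show "\<forall>\<^sub>F L in sequentially. continuous_on {0<..} (Pp L)"
    unfolding Pp_def by (intro always_eventually allI continuous_intros) auto
  show "uniform_limit {0<..} Pp asum sequentially"
    unfolding uniform_limit_iff
  proof (intro allI impI)
    fix e :: real assume e: "e > 0"
    obtain N :: nat where N: "1 / real N < e" "N > 0"
      by (metis e gr_zeroI inverse_eq_divide real_arch_inverse)
    show "\<forall>\<^sub>F L in sequentially. \<forall>t\<in>{0<..}. dist (Pp L t) (asum t) < e"
    proof (rule eventually_sequentiallyI[of N], intro ballI)
      fix L t assume L: "N \<le> L" and t: "(t::real) \<in> {0<..}"
      have "dist (Pp L t) (asum t) \<le> 1 / (t + real L)"
        using asum_tail[of t L] t by (simp add: dist_real_def abs_minus_commute)
      also have "\<dots> \<le> 1 / real N" using L N t by (simp add: divide_simps)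
      finally show "dist (Pp L t) (asum t) < e" using N by linarith
    qed
  qed
qed simp


definition gg :: "real \<Rightarrow> real" where "gg t = asum t + asum (1 - t)"

lemma gg_cont: "continuous_on {0<..<1} gg"
proof -
  have "continuous_on {0<..<1} asum" using asum_cont by (rule continuous_on_subset) auto
  moreover have "continuous_on {0<..<1} (\<lambda>t. asum (1 - t))"
    by (rule continuous_on_compose2[OF asum_cont]) (auto intro!: continuous_intros)
  ultimately show ?thesis unfolding gg_def by (intro continuous_intros)
qed

lemma gg_lower: "0 < t \<Longrightarrow> t < 1 \<Longrightarrow> gg t \<ge> 1/t - 1"
  using asum_bounds[of t] asum_bounds[of "1-t"] unfolding gg_def by linarith

lemma gg_hits:
  assumes "v \<ge> pi"
  shows "\<exists>t. 0 < t \<and> t \<le> 1/2 \<and> gg t = v"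
proof -
  have vp: "v > 0" using assms pi_gt3 by linarith
  define t0 where "t0 = 1 / (v + 2)"
  have t0: "0 < t0" "t0 \<le> 1/2" using vp by (auto simp: t0_def divide_simps)
  have "gg t0 \<ge> 1/t0 - 1" using gg_lower t0 by auto
  then have "gg t0 \<ge> v" by (simp add: t0_def)
  moreover have "gg (1/2) \<le> v" using asum_half assms by (simp add: gg_def)
  moreover have "continuous_on {t0..1/2} gg"
    using gg_cont by (rule continuous_on_subset) (use t0 in auto)
  ultimately obtain t where "t0 \<le> t" "t \<le> 1/2" "gg t = v"
    using IVT2'[of gg "1/2" v t0] t0 by auto
  then show ?thesis using t0 by (intro exI[of _ t]) auto
qed

lemma sum_split_nat: "(\<Sum>k<m+q. f k) = (\<Sum>k<m. f k) + (\<Sum>i<q. f (m+i))"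
  for f :: "nat \<Rightarrow> real"
  by (induction q) (auto simp: add.assoc)

lemma reindex:
  fixes t :: real
  assumes "real m + t = s" "m \<le> n"
  shows "(\<Sum>k=0..n. (-1)^k * (1 / (s - real k))) = (-1)^m * (Pp (m+1) t + Pp (n-m) (1-t))"
proof -
  define f where "f k = (-1)^k * (1 / (s - real k))" for k
  have "(\<Sum>k=0..n. f k) = (\<Sum>k<(m+1)+(n-m). f k)"
    using assms(2) by (simp add: atLeast0AtMost lessThan_Suc_atMost[symmetric])
  also have "\<dots> = (\<Sum>k<m+1. f k) + (\<Sum>i<n-m. f (m+1+i))" by (rule sum_split_nat)
  also have "(\<Sum>k<m+1. f k) = (\<Sum>i<m+1. f (m + 1 - Suc i))" by (rule sum.nat_diff_reindex[symmetric])
  also have "\<dots> = (\<Sum>i<m+1. (-1)^m * ((-1)^i * (1 / (t + real i))))"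
  proof (rule sum.cong[OF refl])
    fix i assume "i \<in> {..<m+1}"
    then have i: "i \<le> m" by auto
    have p: "(-1::real)^(m-i) = (-1)^m * (-1)^i"
    proof -
      have "(-1::real)^m = (-1)^(m-i) * (-1)^i" using i by (simp add: power_add[symmetric])
      then have "(-1::real)^m * (-1)^i = (-1)^(m-i) * ((-1)^i * (-1)^i)" by simp
      also have "(-1::real)^i * (-1)^i = 1" by (simp add: power_add[symmetric] flip: power_mult_distrib)
      finally show ?thesis by simp
    qed
    have "s - real (m - i) = t + real i" using i assms(1) by (simp add: of_nat_diff)
    then show "f (m + 1 - Suc i) = (-1)^m * ((-1)^i * (1 / (t + real i)))"
      using p by (simp add: f_def)
  qed
  also have "(\<Sum>i<n-m. f (m+1+i)) = (\<Sum>i<n-m. (-1)^m * ((-1)^i * (1 / ((1-t) + real i))))"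
  proof (rule sum.cong[OF refl])
    fix i
    have hs: "s - real (m+1+i) = - ((1-t) + real i)" using assms(1) by simp
    have h: "1 / (s - real (m+1+i)) = - (1 / ((1-t) + real i))" by (simp only: hs divide_minus_right)
    have "f (m+1+i) = (-1)^(m+1+i) * - (1 / ((1-t) + real i))" by (simp only: f_def h)
    also have "\<dots> = (-1)^m * ((-1)^i * (1 / ((1-t) + real i)))" by (simp add: power_add)
    finally show "f (m+1+i) = (-1)^m * ((-1)^i * (1 / ((1-t) + real i)))" .
  qed
  finally show ?thesis
    by (simp add: f_def Pp_def sum_distrib_left distrib_left)
qed

lemma rescale:
  assumes "n > 0"
  shows "D n x / real n = (1/2) * (\<Sum>k=0..n. (-1)^k * (1 / (real n * ((x+1)/2) - real k)))"
proof -
  have e: "1 / (x - node k n) = (real n / 2) * (1 / (real n * ((x+1)/2) - real k))" for k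
  proof -
    have "x - node k n = (2 / real n) * (real n * ((x+1)/2) - real k)"
      using assms by (simp add: node_def field_simps)
    then show ?thesis using assms by simp
  qed
  have "D n x = (\<Sum>k=0..n. (real n / 2) * ((-1)^k * (1 / (real n * ((x+1)/2) - real k))))"
    unfolding D_def e by (intro sum.cong refl mult.left_commute)
  also have "\<dots> = (real n / 2) * (\<Sum>k=0..n. (-1)^k * (1 / (real n * ((x+1)/2) - real k)))"
    by (rule sum_distrib_left[symmetric])
  finally show ?thesis using assms by simp
qed

lemma core:
  fixes x t :: real
  assumes c: "0 < (x+1)/2" "(x+1)/2 < 1" and n: "n > 0" and t: "0 < t" "t < 1"
    and eq: "real n * ((x+1)/2) = real m + t"
  shows "\<bar>D n x / real n - (1/2) * (-1)^m * gg t\<bar>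
           \<le> 1/(real n * ((x+1)/2)) + 1/(real n * (1-(x+1)/2))"
proof -
  define c where "c = (x+1)/2"
  have c1: "0 < c" "c < 1" and eq1: "real n * c = real m + t" using c eq by (auto simp: c_def)
  have "real m < real n" using eq1 c1 t n
    by (smt (verit, ccfv_SIG) mult_less_cancel_left2 of_nat_0_less_iff)
  then have mn: "m \<le> n" by simp
  have D: "D n x / real n = (1/2) * ((-1)^m * (Pp (m+1) t + Pp (n-m) (1-t)))"
    using rescale[OF n, of x] reindex[OF eq[symmetric] mn] by simp
  define e1 where "e1 = Pp (m+1) t - asum t"
  define e2 where "e2 = Pp (n-m) (1-t) - asum (1-t)"
  have b1: "\<bar>e1\<bar> \<le> 1/(real n * c)"
  proof -
    have "\<bar>e1\<bar> \<le> 1 / (t + real (m+1))" using asum_tail[OF t(1), of "m+1"] by (simp add: e1_def abs_minus_commute)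
    also have "\<dots> \<le> 1/(real n * c)" using eq1 c1 n t by (intro divide_left_mono) auto
    finally show ?thesis .
  qed
  have b2: "\<bar>e2\<bar> \<le> 1/(real n * (1-c))"
  proof -
    have q1: "real n * (1-c) \<le> (1-t) + real (n-m)" using eq1 mn by (simp add: of_nat_diff algebra_simps)
    have q2: "0 < real n * (1-c)" using c1 n by simp
    have step: "1 / ((1-t) + real (n-m)) \<le> 1/(real n * (1-c))"
      by (rule divide_left_mono[OF q1]) (use q1 q2 in auto)
    have "\<bar>e2\<bar> \<le> 1 / ((1-t) + real (n-m))" using asum_tail[of "1-t" "n-m"] t by (simp add: e2_def abs_minus_commute)
    then show ?thesis using step by linarith
  qed
  have "D n x / real n - (1/2) * (-1)^m * gg t = (1/2) * (-1)^m * (e1 + e2)"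
    unfolding D e1_def e2_def gg_def by (simp add: algebra_simps)
  moreover have "\<bar>(1/2) * (-1)^m * (e1 + e2)\<bar> = (1/2) * \<bar>e1 + e2\<bar>"
    by (simp add: abs_mult power_abs)
  ultimately have "\<bar>D n x / real n - (1/2) * (-1)^m * gg t\<bar> = (1/2) * \<bar>e1 + e2\<bar>"
    by (simp only:)
  also have "\<dots> \<le> \<bar>e1\<bar> + \<bar>e2\<bar>" by simp
  finally show ?thesis using b1 b2 by (simp add: c_def)
qed

lemma lt_half: "(A::real) = 2 * B \<Longrightarrow> B < e / 2 \<Longrightarrow> A < e" by linarith

lemma kron:
  fixes c \<beta> \<epsilon> :: real
  assumes "c \<notin> \<rat>" "r \<in> {0,1::nat}" "\<epsilon> > 0"
  shows "\<exists>n\<ge>M. n mod 2 = r \<and> (\<exists>h::int. \<bar>real n * c - 2 * of_int h - \<beta>\<bar> < \<epsilon>)"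
proof -
  define th where "th = real (M+1) * c"
  have "th \<notin> \<rat>"
  proof
    assume "th \<in> \<rat>"
    then have "th / real (M+1) \<in> \<rat>" by (simp add: Rats_divide)
    then show False using assms(1) by (simp add: th_def)
  qed
  then obtain h k where k: "k > 0" "\<bar>of_int k * th - of_int h - (\<beta> - real r * c)/2\<bar> < \<epsilon>/2"
    using sequence_of_fractional_parts_is_dense[of th "\<epsilon>/2" "(\<beta> - real r * c)/2"] assms(3)
    by (metis half_gt_zero)
  define n where "n = 2 * nat k * (M+1) + r"
  have rn: "real n = 2 * of_int k * real (M+1) + real r" using k(1) by (simp add: n_def algebra_simps)
  have eq: "real n * c - 2 * of_int h - \<beta> = 2 * (of_int k * th - of_int h - (\<beta> - real r * c)/2)"
    unfolding rn th_def by (simp add: field_simps)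
  have "\<bar>real n * c - 2 * of_int h - \<beta>\<bar> = \<bar>2 * (of_int k * th - of_int h - (\<beta> - real r * c)/2)\<bar>"
    by (simp only: eq)
  also have "\<dots> = 2 * \<bar>of_int k * th - of_int h - (\<beta> - real r * c)/2\<bar>" by (simp only: abs_mult abs_numeral)
  finally have calc: "\<bar>real n * c - 2 * of_int h - \<beta>\<bar> = 2 * \<bar>of_int k * th - of_int h - (\<beta> - real r * c)/2\<bar>" .
  have "\<bar>real n * c - 2 * of_int h - \<beta>\<bar> < \<epsilon>" by (rule lt_half[OF calc k(2)])
  moreover have "n \<ge> M"
  proof -
    have "1 \<le> nat k" using k(1) by simp
    then have "1 * (M+1) \<le> nat k * (M+1)" by (rule mult_le_mono1)
    then have a: "M \<le> nat k * (M+1)" by simp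
    have b: "nat k * (M+1) \<le> 2 * (nat k * (M+1)) + r" by simp
    show ?thesis unfolding n_def mult.assoc using order.trans[OF a b] .
  qed
  moreover have "n mod 2 = r"
  proof -
    have "n mod 2 = r mod 2" unfolding n_def mult.assoc by (simp only: mod_mult_self4)
    then show ?thesis using assms(2) by auto
  qed
  ultimately show ?thesis by blast
qed

lemma seq_pick:
  fixes Q :: "nat \<Rightarrow> nat \<Rightarrow> bool"
  assumes "\<And>j M. \<exists>n\<ge>M. Q j n"
  shows "\<exists>f. strict_mono f \<and> (\<forall>j. Q j (f j))"
proof -
  define f where "f = rec_nat (SOME n. Q 0 n) (\<lambda>j fj. SOME n. n \<ge> Suc fj \<and> Q (Suc j) n)"
  have f0: "Q 0 (f 0)" unfolding f_def using someI_ex[of "Q 0"] assms[of 0 0] by auto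
  have fS: "f (Suc j) \<ge> Suc (f j) \<and> Q (Suc j) (f (Suc j))" for j
  proof -
    have "f (Suc j) = (SOME n. n \<ge> Suc (f j) \<and> Q (Suc j) n)" by (simp add: f_def)
    then show ?thesis using someI_ex[of "\<lambda>n. n \<ge> Suc (f j) \<and> Q (Suc j) n"] assms[where j="Suc j" and M="Suc (f j)"]
      by auto
  qed
  have "strict_mono f" unfolding strict_mono_Suc_iff using fS by (simp add: Suc_le_lessD)
  moreover have "Q j (f j)" for j using f0 fS by (cases j) auto
  ultimately show ?thesis by blast
qed

lemma good:
  fixes x th0 \<epsilon> :: real
  assumes x: "x \<in> {-1<..<1}" "x \<notin> \<rat>" and r: "r \<in> {0,1::nat}" and p: "p \<in> {0,1::nat}"
    and e: "\<epsilon> > 0" "th0 - \<epsilon> > 0" "th0 + \<epsilon> < 1"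
  shows "\<exists>n\<ge>M. n > 0 \<and> n mod 2 = r \<and> (\<exists>t. \<bar>t - th0\<bar> < \<epsilon> \<and> 0 < t \<and> t < 1 \<and>
     \<bar>D n x / real n - (1/2) * (-1)^p * gg t\<bar> \<le> 1/(real n * ((x+1)/2)) + 1/(real n * (1-(x+1)/2)))"
proof -
  define c where "c = (x+1)/2"
  have c: "0 < c" "c < 1" using x by (auto simp: c_def)
  have "c \<notin> \<rat>"
  proof
    assume "c \<in> \<rat>"
    then have "2 * c - 1 \<in> \<rat>" by simp
    moreover have "2 * c - 1 = x" by (simp add: c_def field_simps)
    ultimately show False using x by simp
  qed
  then obtain n h where n: "n \<ge> max M 1" "n mod 2 = r" "\<bar>real n * c - 2 * of_int h - (real p + th0)\<bar> < \<epsilon>"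
    using kron[OF _ r e(1), of c "max M 1" "real p + th0"] by blast
  have npos: "n > 0" using n(1) by simp
  have "real n * c > 0" using npos c by simp
  then have "2 * of_int h + real p > -1" using n(3) e by linarith
  then have "2 * h + int p > -1" by linarith
  then have h0: "h \<ge> 0" using p by auto
  define m where "m = 2 * nat h + p"
  have rm: "real m = 2 * of_int h + real p" using h0 by (simp add: m_def)
  define t where "t = real n * c - real m"
  have tt: "\<bar>t - th0\<bar> < \<epsilon>" using n(3) rm by (simp add: t_def algebra_simps)
  then have t01: "0 < t" "t < 1" using e by auto
  have eqn: "real n * ((x+1)/2) = real m + t" by (simp add: t_def c_def)
  have pm: "(-1::real)^m = (-1)^p" by (simp add: m_def power_add power_mult)
  show ?thesis
    using core[OF c[unfolded c_def] npos t01 eqn] pm tt t01 npos n by (intro exI[of _ n]) auto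
qed

lemma err_small:
  fixes c e :: real
  assumes "0 < c" "c < 1" "e > 0"
  shows "\<exists>M. \<forall>n\<ge>M. 1/(real n * c) + 1/(real n * (1-c)) < e"
proof -
  obtain M :: nat where M: "1/(e*c*(1-c)) < real M" using reals_Archimedean2 by blast
  have pos: "e*c*(1-c) > 0" using assms by simp
  have "\<forall>n\<ge>M. 1/(real n * c) + 1/(real n * (1-c)) < e"
  proof (intro allI impI)
    fix n assume n: "M \<le> n"
    have "1/(e*c*(1-c)) < real n" using M n by linarith
    then have lt: "1 < real n * (e*c*(1-c))" using pos by (simp add: divide_less_eq)
    then have np: "real n > 0" by (cases "n = 0") auto
    have "1/(real n * c) + 1/(real n * (1-c)) = 1/(real n * c * (1-c))"
      using np assms by (simp add: field_simps)
    also have "\<dots> < e" using lt np assms by (simp add: divide_less_eq algebra_simps)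
    finally show "1/(real n * c) + 1/(real n * (1-c)) < e" .
  qed
  then show ?thesis by blast
qed

lemma tri: "(A::real) = B + C \<Longrightarrow> \<bar>C\<bar> = (1/2) * E \<Longrightarrow> \<bar>B\<bar> < e/2 \<Longrightarrow> E < e \<Longrightarrow> \<bar>A\<bar> < e"
  by linarith

lemma fin_case:
  fixes x v :: real
  assumes x: "x \<in> {-1<..<1}" "x \<notin> \<rat>" and r: "r \<in> {0,1::nat}" and v: "\<bar>v\<bar> \<ge> pi/2"
  shows "\<exists>f. strict_mono f \<and> (\<forall>j. f j mod 2 = r \<and> \<bar>D (f j) x / real (f j) - v\<bar> < inverse (real (Suc j)))"
proof -
  define c where "c = (x+1)/2"
  have c: "0 < c" "c < 1" using x by (auto simp: c_def)
  define w where "w = 2 * \<bar>v\<bar>"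
  have "w \<ge> pi" using v by (simp add: w_def)
  then obtain t0 where t0: "0 < t0" "t0 \<le> 1/2" "gg t0 = w" using gg_hits by blast
  define p :: nat where "p = (if v \<ge> 0 then 0 else 1)"
  have p: "p \<in> {0,1}" by (simp add: p_def)
  have vp: "(1/2) * (-1)^p * w = v" by (simp add: p_def w_def)
  have cont: "\<forall>e>0. \<exists>d>0. \<forall>t\<in>{0<..<1}. dist t t0 < d \<longrightarrow> dist (gg t) (gg t0) < e"
    using gg_cont t0 unfolding continuous_on_iff by auto
  have stage: "\<exists>n\<ge>M. n mod 2 = r \<and> \<bar>D n x / real n - v\<bar> < inverse (real (Suc j))" for j M
  proof -
    define e where "e = inverse (real (Suc j))"
    have e: "e > 0" by (simp add: e_def)
    obtain d where d: "d > 0" "\<And>t. t\<in>{0<..<1} \<Longrightarrow> dist t t0 < d \<Longrightarrow> dist (gg t) (gg t0) < e"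
      using cont e by (metis half_gt_zero)
    obtain M1 where M1: "\<And>n. n \<ge> M1 \<Longrightarrow> 1/(real n * c) + 1/(real n * (1-c)) < e/2"
      using err_small[OF c, of "e/2"] e by auto
    define eps where "eps = min d (t0/2)"
    have eps: "eps > 0" "t0 - eps > 0" "t0 + eps < 1" using d t0 by (auto simp: eps_def)
    obtain n t where n: "n \<ge> max M M1" "n > 0" "n mod 2 = r" and t: "\<bar>t - t0\<bar> < eps" "0 < t" "t < 1"
      and bd: "\<bar>D n x / real n - (1/2) * (-1)^p * gg t\<bar> \<le> 1/(real n * ((x+1)/2)) + 1/(real n * (1-(x+1)/2))"
      using good[OF x r p eps, of "max M M1"] by blast
    have b1: "\<bar>D n x / real n - (1/2) * (-1)^p * gg t\<bar> < e/2"
      using bd M1[of n] n(1) by (simp add: c_def)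
    have "dist (gg t) (gg t0) < e" using d(2)[of t] t eps_def by (simp add: dist_real_def)
    then have b2: "\<bar>gg t - w\<bar> < e" using t0 by (simp add: dist_real_def)
    have q1: "D n x / real n - v = (D n x / real n - (1/2) * (-1)^p * gg t) + (1/2) * (-1)^p * (gg t - w)"
      unfolding vp[symmetric] by (simp add: field_simps)
    have q2: "\<bar>(1/2) * (-1)^p * (gg t - w)\<bar> = (1/2) * \<bar>gg t - w\<bar>" by (simp add: abs_mult power_abs)
    have "\<bar>D n x / real n - v\<bar> < e" by (rule tri[OF q1 q2 b1 b2])
    then show ?thesis using n e_def by auto
  qed
  show ?thesis using seq_pick[of "\<lambda>j n. n mod 2 = r \<and> \<bar>D n x / real n - v\<bar> < inverse (real (Suc j))"] stage
    by blast
qed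

lemma inf_case:
  fixes x :: real
  assumes x: "x \<in> {-1<..<1}" "x \<notin> \<rat>" and r: "r \<in> {0,1::nat}" and p: "p \<in> {0,1::nat}"
  shows "\<exists>f. strict_mono f \<and> (\<forall>j. f j mod 2 = r \<and> (-1)^p * (D (f j) x / real (f j)) \<ge> real j)"
proof -
  define c where "c = (x+1)/2"
  have c: "0 < c" "c < 1" using x by (auto simp: c_def)
  obtain M1 where M1: "\<And>n. n \<ge> M1 \<Longrightarrow> 1/(real n * c) + 1/(real n * (1-c)) < 1"
    using err_small[OF c, of 1] by auto
  have stage: "\<exists>n\<ge>M. n mod 2 = r \<and> (-1)^p * (D n x / real n) \<ge> real j" for j M
  proof -
    define t0 where "t0 = 1 / (4 * real j + 20)"
    have t0p: "t0 > 0" "t0 < 1/4" by (auto simp: t0_def divide_simps)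
    have eps: "t0/2 > 0" "t0 - t0/2 > 0" "t0 + t0/2 < 1" using t0p by auto
    obtain n t where n: "n \<ge> max M M1" "n > 0" "n mod 2 = r" and t: "\<bar>t - t0\<bar> < t0/2" "0 < t" "t < 1"
      and bd: "\<bar>D n x / real n - (1/2) * (-1)^p * gg t\<bar> \<le> 1/(real n * ((x+1)/2)) + 1/(real n * (1-(x+1)/2))"
      using good[OF x r p eps, of "max M M1"] by blast
    have b1: "\<bar>D n x / real n - (1/2) * (-1)^p * gg t\<bar> < 1"
      using bd M1[of n] n(1) by (simp add: c_def)
    have sq: "(-1::real)^p * (-1)^p = 1" using p by auto
    have "(-1)^p * (D n x / real n) - (1/2) * gg t = (-1)^p * (D n x / real n - (1/2) * (-1)^p * gg t)"
      using sq by (simp add: algebra_simps)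
    then have b1': "\<bar>(-1)^p * (D n x / real n) - (1/2) * gg t\<bar> < 1"
      using b1 by (simp add: abs_mult power_abs)
    have "t < 2 * t0" using t by linarith
    then have "1/t > 1/(2*t0)" using t by (simp add: divide_strict_left_mono)
    moreover have "1/(2*t0) = 2 * real j + 10" by (simp add: t0_def)
    ultimately have "1/t > 2 * real j + 10" by simp
    moreover have "gg t \<ge> 1/t - 1" using gg_lower t by auto
    ultimately have "(-1)^p * (D n x / real n) \<ge> real j" using b1' by linarith
    then show ?thesis using n by auto
  qed
  show ?thesis using seq_pick[of "\<lambda>j n. n mod 2 = r \<and> (-1)^p * (D n x / real n) \<ge> real j"] stage
    by blast
qed

theorem lemma7:
  fixes x :: real and r :: nat and y :: ereal
  assumes "x \<in> {-1<..<1}" and "x \<notin> \<rat>"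
    and "r \<in> {0, 1}"
    and "\<bar>y\<bar> \<ge> ereal (pi / 2)"
  shows "\<exists>n :: nat \<Rightarrow> nat. strict_mono n \<and> (\<forall>j. n j mod 2 = r) \<and>
           ((\<lambda>j. ereal (D (n j) x / real (n j))) \<longlonglongrightarrow> y)"
proof (cases y)
  case (real v)
  then have v: "\<bar>v\<bar> \<ge> pi/2" using assms(4) by simp
  obtain f where f: "strict_mono f" "\<And>j. f j mod 2 = r"
    "\<And>j. \<bar>D (f j) x / real (f j) - v\<bar> < inverse (real (Suc j))"
    using fin_case[OF assms(1,2,3) v] by blast
  have "(\<lambda>j. D (f j) x / real (f j) - v) \<longlonglongrightarrow> 0"
  proof (rule Lim_null_comparison[OF _ LIMSEQ_inverse_real_of_nat])
    show "\<forall>\<^sub>F j in sequentially. norm (D (f j) x / real (f j) - v) \<le> inverse (real (Suc j))"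
      using f(3) by (intro always_eventually allI) (simp add: less_imp_le)
  qed
  then have "(\<lambda>j. D (f j) x / real (f j) - v + v) \<longlonglongrightarrow> 0 + v" by (intro tendsto_intros)
  then have "(\<lambda>j. D (f j) x / real (f j)) \<longlonglongrightarrow> v" by simp
  then have "(\<lambda>j. ereal (D (f j) x / real (f j))) \<longlonglongrightarrow> y" unfolding real by (rule tendsto_ereal)
  then show ?thesis using f by blast
next
  case PInf
  obtain f where f: "strict_mono f" "\<And>j. f j mod 2 = r"
    "\<And>j. (-1)^0 * (D (f j) x / real (f j)) \<ge> real j"
    using inf_case[OF assms(1,2,3), of 0] by blast
  have "(\<lambda>j. ereal (D (f j) x / real (f j))) \<longlonglongrightarrow> \<infinity>"
    unfolding tendsto_PInfty
  proof
    fix R :: real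
    obtain N :: nat where N: "R < real N" using reals_Archimedean2 by blast
    show "\<forall>\<^sub>F j in sequentially. ereal R < ereal (D (f j) x / real (f j))"
    proof (rule eventually_sequentiallyI[of N])
      fix j assume "N \<le> j"
      then show "ereal R < ereal (D (f j) x / real (f j))" using f(3)[of j] N by simp
    qed
  qed
  then show ?thesis using f PInf by blast
next
  case MInf
  obtain f where f: "strict_mono f" "\<And>j. f j mod 2 = r"
    "\<And>j. (-1)^1 * (D (f j) x / real (f j)) \<ge> real j"
    using inf_case[OF assms(1,2,3), of 1] by blast
  have "(\<lambda>j. ereal (D (f j) x / real (f j))) \<longlonglongrightarrow> -\<infinity>"
    unfolding tendsto_MInfty
  proof
    fix R :: real
    obtain N :: nat where N: "- R < real N" using reals_Archimedean2 by blast
    show "\<forall>\<^sub>F j in sequentially. ereal (D (f j) x / real (f j)) < ereal R"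
    proof (rule eventually_sequentiallyI[of N])
      fix j assume "N \<le> j"
      then show "ereal (D (f j) x / real (f j)) < ereal R" using f(3)[of j] N by simp
    qed
  qed
  then show ?thesis using f MInf by blast
qed

end
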